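(* Let $a,b$ be as in the context and let $w=(w_n)_{n\ge0}$ be a sequence of complex numbers. If $$\sup_{n\ge0}\Big|\frac{w_na_n}{a_{n+1}}\Big|<\infty\quad\text{and}\quad\limsup_{n\to\infty}\Big|\frac{b_n}{a_{n+1}}\Big|<1,$$ then, with $c_n:=w_{n+1}\frac{b_n}{a_{n+2}}-w_n\frac{a_n}{a_{n+1}}\frac{b_{n+1}}{a_{n+2}}$, one has $\sup_{n\ge0}|c_n|<\infty$ and $\sum_{n=3}^{\infty}\sup_{j\ge0}\big|c_j\prod_{k=3}^{n}\frac{b_{j+k-1}}{a_{j+k}}\big|<\infty$; consequently $F_w$ is a bounded operator on $\ell^p_{a,b}$ for every $1\le p<\infty$ and on $c_{0,a,b}$.
   Context: Let $a=(a_n)_{n\ge0}$, $b=(b_n)_{n\ge0}$ be sequences of nonzero complex numbers with $\limsup_{n\to\infty}(|a_n|+|b_n|)^{1/n}<\infty$, and let $R=1/\limsup_{n}(|a_n|+|b_n|)^{1/n}\in(0,\infty]$. For $n\ge0$ let $f_n(z)=(a_n+b_nz)z^n$. For $1\le p<\infty$, $\ell^p_{a,b}$ is the space of analytic functions on $\{|z|<R\}$ of the form $f=\sum_{n\ge0}\lambda_nf_n$ with $(\lambda_n)\in\ell^p(\mathbb{N}_0)$ (the series converges locally uniformly on $\{|z|<R\}$ and the $\lambda_n$ are uniquely determined by $f$), normed by $\|f\|=(\sum_n|\lambda_n|^p)^{1/p}$; thus $\{f_n\}$ is a normalized Schauder basis equivalent to the standard basis of $\ell^p(\mathbb{N}_0)$.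 The space $c_{0,a,b}$ is defined in the same way with $(\lambda_n)\in c_0(\mathbb{N}_0)$ and norm $\sup_n|\lambda_n|$. For a sequence $w=(w_n)_{n\ge0}$, the weighted forward shift is $F_w\big(\sum_{n\ge0}\mu_nz^n\big)=\sum_{n\ge0}\mu_nw_nz^{n+1}$ (acting on power series); "bounded on $X$" means $F_w$ maps $X$ into $X$ and is a bounded operator. *)

theory Defs
  imports "HOL-Analysis.Analysis"
begin

definition fab :: "(nat \<Rightarrow> complex) \<Rightarrow> (nat \<Rightarrow> complex) \<Rightarrow> nat \<Rightarrow> complex \<Rightarrow> complex" where
  "fab a b n z = (a n + b n * z) * z ^ n"

definition growth_ab :: "(nat \<Rightarrow> complex) \<Rightarrow> (nat \<Rightarrow> complex) \<Rightarrow> ereal" where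
  "growth_ab a b = limsup (\<lambda>n. ereal (root n (cmod (a n) + cmod (b n))))"

text \<open>The disc {|z| < R}, R = 1 / limsup (assumed finite limsup, so this is a real number L >= 0
  and the disc is {z. |z| * L < 1}, which is all of C when L = 0).\<close>
definition disc_ab :: "(nat \<Rightarrow> complex) \<Rightarrow> (nat \<Rightarrow> complex) \<Rightarrow> complex set" where
  "disc_ab a b = {z. cmod z * real_of_ereal (growth_ab a b) < 1}"

definition represents_ab ::
  "(nat \<Rightarrow> complex) \<Rightarrow> (nat \<Rightarrow> complex) \<Rightarrow> (nat \<Rightarrow> complex) \<Rightarrow> (complex \<Rightarrow> complex) \<Rightarrow> bool" where
  "represents_ab a b lam f \<longleftrightarrow> (\<forall>z \<in> disc_ab a b. (\<lambda>n. lam n * fab a b n z) sums f z)"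

definition in_lp :: "real \<Rightarrow> (nat \<Rightarrow> complex) \<Rightarrow> bool" where
  "in_lp p lam \<longleftrightarrow> summable (\<lambda>n. cmod (lam n) powr p)"

definition lp_norm :: "real \<Rightarrow> (nat \<Rightarrow> complex) \<Rightarrow> real" where
  "lp_norm p lam = (\<Sum>n. cmod (lam n) powr p) powr (1 / p)"

definition in_c0 :: "(nat \<Rightarrow> complex) \<Rightarrow> bool" where
  "in_c0 lam \<longleftrightarrow> lam \<longlonglongrightarrow> 0"

definition sup_norm :: "(nat \<Rightarrow> complex) \<Rightarrow> real" where
  "sup_norm lam = (SUP n. cmod (lam n))"

definition taylor_coeff :: "(complex \<Rightarrow> complex) \<Rightarrow> nat \<Rightarrow> complex" where
  "taylor_coeff f m = (deriv ^^ m) f 0 / fact m"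

text \<open>g is F_w f: the power series of g is sum mu_n w_n z^(n+1), where sum mu_n z^n is that of f.\<close>
definition is_shift_image :: "(nat \<Rightarrow> complex) \<Rightarrow> (complex \<Rightarrow> complex) \<Rightarrow> (complex \<Rightarrow> complex) \<Rightarrow> bool" where
  "is_shift_image w f g \<longleftrightarrow>
     (\<forall>m. taylor_coeff g m = (if m = 0 then 0 else w (m - 1) * taylor_coeff f (m - 1)))"

definition shift_bounded_lp :: "real \<Rightarrow> (nat \<Rightarrow> complex) \<Rightarrow> (nat \<Rightarrow> complex) \<Rightarrow> (nat \<Rightarrow> complex) \<Rightarrow> bool" where
  "shift_bounded_lp p a b w \<longleftrightarrow>
     (\<exists>C. \<forall>lam f. in_lp p lam \<and> represents_ab a b lam f \<longrightarrow>
        (\<exists>lam' g. in_lp p lam' \<and> represents_ab a b lam' g \<and> is_shift_image w f g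
                 \<and> lp_norm p lam' \<le> C * lp_norm p lam))"

definition shift_bounded_c0 :: "(nat \<Rightarrow> complex) \<Rightarrow> (nat \<Rightarrow> complex) \<Rightarrow> (nat \<Rightarrow> complex) \<Rightarrow> bool" where
  "shift_bounded_c0 a b w \<longleftrightarrow>
     (\<exists>C. \<forall>lam f. in_c0 lam \<and> represents_ab a b lam f \<longrightarrow>
        (\<exists>lam' g. in_c0 lam' \<and> represents_ab a b lam' g \<and> is_shift_image w f g
                 \<and> sup_norm lam' \<le> C * sup_norm lam))"

end

theory Submission
  imports Defs
begin



lemma powr_conv2:
  fixes q a c p :: real
  assumes q: "0 < q" "q < 1" and p: "1 \<le> p" and a: "0 \<le> a" and c: "0 \<le> c"
  shows "(q*a + (1-q)*c) powr p \<le> q * a powr p + (1-q) * c powr p"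
proof (cases "a = 0 \<or> c = 0")
  case True
  have k: "t powr p \<le> t" if "0 \<le> t" "t \<le> 1" for t :: real
    using that p by (metis powr_one_eq_one powr_le1 powr_mono2' powr_one_gt_zero_iff order.refl
         le_less less_le_trans powr_one powr_mono' zero_le_one)
  show ?thesis
  proof (cases "a = 0")
    case True
    have "((1-q)*c) powr p = (1-q) powr p * c powr p" using q c by (simp add: powr_mult)
    also have "\<dots> \<le> (1-q) * c powr p" using k[of "1-q"] q by (intro mult_right_mono) auto
    finally show ?thesis using True p by simp
  next
    case False
    then have "c = 0" using \<open>a = 0 \<or> c = 0\<close> by auto
    have "(q*a) powr p = q powr p * a powr p" using q a by (simp add: powr_mult)
    also have "\<dots> \<le> q * a powr p" using k[of "q"] q by (intro mult_right_mono) auto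
    finally show ?thesis using \<open>c = 0\<close> p by simp
  qed
next
  case False
  then have "a \<in> {0<..}" "c \<in> {0<..}" using a c by auto
  from convex_onD[OF powr_convex[OF p], of "1-q" a c, OF _ _ this] q
  show ?thesis by (simp add: algebra_simps)
qed

lemma T_nonneg:
  fixes q :: real and y T :: "nat \<Rightarrow> real"
  assumes "0 \<le> q" "\<And>m. 0 \<le> y m" "T 0 = 0" "\<And>m. T (Suc m) = q * T m + y m"
  shows "0 \<le> T m"
  by (induction m) (use assms in auto)

lemma T_sup:
  fixes q B :: real and y T :: "nat \<Rightarrow> real"
  assumes q: "0 < q" "q < 1" and "\<And>m. 0 \<le> y m" "\<And>m. y m \<le> B"
    "T 0 = 0" "\<And>m. T (Suc m) = q * T m + y m"
  shows "T m \<le> B / (1 - q)"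
proof (induction m)
  case 0
  have "0 \<le> B" using assms(3)[of 0] assms(4)[of 0] by linarith
  then show ?case using assms q by simp
next
  case (Suc m)
  have "T (Suc m) \<le> q * (B / (1-q)) + B"
    using Suc assms(4)[of m] assms(6)[of m] q mult_left_mono[OF Suc, of q] by simp
  also have "\<dots> = B / (1-q)" using q by (simp add: field_simps)
  finally show ?case .
qed

lemma aux_ring: "q*(X+h) + h*(1-q) = q*X + (h::real)" by (simp add: algebra_simps)

lemma T_lim:
  fixes q :: real and y T :: "nat \<Rightarrow> real"
  assumes q: "0 < q" "q < 1" and y0: "\<And>m. 0 \<le> y m" and ylim: "y \<longlonglongrightarrow> 0"
    and T0: "T 0 = 0" and TS: "\<And>m. T (Suc m) = q * T m + y m"
  shows "T \<longlonglongrightarrow> 0"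
proof (rule LIMSEQ_I)
  fix e :: real assume e: "0 < e"
  have Tn: "\<And>m. 0 \<le> T m" using T_nonneg[of q y T] q y0 T0 TS by auto
  from LIMSEQ_D[OF ylim, of "e*(1-q)/2"] e q obtain N where
    N0: "\<And>n. n \<ge> N \<Longrightarrow> norm (y n - 0) < e*(1-q)/2" by auto
  have N: "y n < e*(1-q)/2" if "n \<ge> N" for n using N0[OF that] by simp
  have ind: "T (N + k) \<le> q^k * T N + e/2" for k
  proof (induction k)
    case 0 then show ?case using e by simp
  next
    case (Suc k)
    have "T (N + Suc k) = q * T (N+k) + y (N+k)" using TS by simp
    also have "\<dots> \<le> q * (q^k * T N + e/2) + (e/2)*(1-q)"
      using Suc N[of "N+k"] q by (intro add_mono mult_left_mono) auto
    also have "\<dots> = q^Suc k * T N + e/2" by (simp only: aux_ring power_Suc mult.assoc)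
    finally show ?case .
  qed
  have "(\<lambda>k. q^k * T N) \<longlonglongrightarrow> 0"
    using q by (intro tendsto_mult_left_zero LIMSEQ_power_zero) auto
  from LIMSEQ_D[OF this, of "e/2"] e obtain K where K: "\<And>k. k \<ge> K \<Longrightarrow> norm (q^k * T N) < e/2" by auto
  show "\<exists>no. \<forall>n\<ge>no. norm (T n - 0) < e"
  proof (intro exI allI impI)
    fix n assume n: "n \<ge> N + K"
    define k where "k = n - N"
    have k: "n = N + k" "k \<ge> K" using n unfolding k_def by auto
    have "q^k * T N < e/2" using K[OF k(2)] Tn q by simp
    then show "norm (T n - 0) < e" using ind[of k] k Tn[of n] by simp
  qed
qed

lemma T_lp:
  fixes q p Y :: real and y T :: "nat \<Rightarrow> real"
  assumes q: "0 < q" "q < 1" and p: "1 \<le> p" and y0: "\<And>m. 0 \<le> y m"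
    and T0: "T 0 = 0" and TS: "\<And>m. T (Suc m) = q * T m + y m"
    and Y: "\<And>n. (\<Sum>m<n. y m powr p) \<le> Y"
  shows "(\<Sum>m<n. T m powr p) \<le> Y / (1-q) powr p"
proof -
  have Tn: "\<And>m. 0 \<le> T m" using T_nonneg[of q y T] q y0 T0 TS by auto
  define Z where "Z = Y / (1-q) powr p"
  have step: "T (Suc m) powr p \<le> q * T m powr p + (1-q) * (y m powr p / (1-q) powr p)" for m
  proof -
    have "T (Suc m) = q * T m + (1-q) * (y m / (1-q))" using TS[of m] q by simp
    then have "T (Suc m) powr p \<le> q * T m powr p + (1-q) * (y m / (1-q)) powr p"
      using powr_conv2[OF q p Tn[of m], of "y m / (1-q)"] y0[of m] q by simp
    then show ?thesis using y0[of m] q by (simp add: powr_divide)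
  qed
  have B: "(\<Sum>m<n. T (Suc m) powr p) \<le> q * (\<Sum>m<n. T m powr p) + (1-q) * Z"
  proof -
    have "(\<Sum>m<n. T (Suc m) powr p) \<le> (\<Sum>m<n. q * T m powr p + (1-q) * (y m powr p / (1-q) powr p))"
      by (intro sum_mono step)
    also have "\<dots> = q * (\<Sum>m<n. T m powr p) + (1-q) * ((\<Sum>m<n. y m powr p) / (1-q) powr p)"
      by (simp add: sum.distrib sum_distrib_left sum_divide_distrib)
    also have "\<dots> \<le> q * (\<Sum>m<n. T m powr p) + (1-q) * Z"
      unfolding Z_def using Y[of n] q by (intro add_left_mono mult_left_mono divide_right_mono) auto
    finally show ?thesis .
  qed
  have A: "(\<Sum>m<n. T m powr p) \<le> (\<Sum>m<n. T (Suc m) powr p)"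
  proof (cases n)
    case 0 then show ?thesis by simp
  next
    case (Suc k)
    have "(\<Sum>m<n. T m powr p) = (\<Sum>m<k. T (Suc m) powr p)"
      unfolding Suc sum.lessThan_Suc_shift using T0 by simp
    also have "\<dots> \<le> (\<Sum>m<n. T (Suc m) powr p)" unfolding Suc by simp
    finally show ?thesis .
  qed
  from A B have "(\<Sum>m<n. T m powr p) \<le> q * (\<Sum>m<n. T m powr p) + (1-q) * Z" by linarith
  then have "(1-q) * (\<Sum>m<n. T m powr p) \<le> (1-q) * Z" by (simp add: algebra_simps)
  then have "(\<Sum>m<n. T m powr p) \<le> Z"
    by (rule mult_left_le_imp_le[of "1-q"]) (use q in auto)
  then show ?thesis unfolding Z_def .
qed



lemma prod_bound:
  fixes \<rho> :: "nat \<Rightarrow> real"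
  assumes r0: "\<And>k. 0 \<le> \<rho> k" and rq: "\<And>k. k \<ge> N \<Longrightarrow> \<rho> k \<le> q" and rM: "\<And>k. \<rho> k \<le> M"
    and q: "0 < q" "q \<le> M"
  shows "(\<Prod>k<n. \<rho> (j+k)) \<le> (M/q)^N * q^n"
proof -
  define G where "G = M/q"
  have G1: "1 \<le> G" using q unfolding G_def by simp
  have "(\<Prod>k<n. \<rho> (j+k)) \<le> G^(min n N) * q^n"
  proof (induction n)
    case 0 then show ?case by simp
  next
    case (Suc n)
    have P0: "0 \<le> (\<Prod>k<n. \<rho> (j+k))" using r0 by (simp add: prod_nonneg)
    have "(\<Prod>k<Suc n. \<rho> (j+k)) = (\<Prod>k<n. \<rho> (j+k)) * \<rho> (j+n)" by simp
    also have "\<dots> \<le> G^(min n N) * q^n * \<rho> (j+n)"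
      using Suc r0 by (intro mult_right_mono) auto
    also have "\<dots> \<le> G^(min (Suc n) N) * q^(Suc n)"
    proof (cases "j + n < N")
      case True
      then have "min (Suc n) N = Suc (min n N)" by simp
      moreover have "\<rho> (j+n) \<le> G * q" using rM q unfolding G_def by simp
      ultimately show ?thesis using G1 q
        by (simp add: mult_left_mono mult_ac)
    next
      case False
      then have "\<rho> (j+n) \<le> q" using rq by simp
      moreover have "G^(min n N) \<le> G^(min (Suc n) N)" using G1 by (intro power_increasing) auto
      ultimately have "G^(min n N) * q^n * \<rho> (j+n) \<le> G^(min (Suc n) N) * q^n * q"
        using G1 q r0 by (intro mult_mono) auto
      then show ?thesis by (simp add: mult_ac)
    qed
    finally show ?case .
  qed
  also have "\<dots> \<le> G^N * q^n" using G1 q by (intro mult_right_mono power_increasing) auto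
  finally show ?thesis unfolding G_def .
qed

lemma rec_bound:
  fixes x u :: "nat \<Rightarrow> complex" and \<rho> y T :: "nat \<Rightarrow> real"
  assumes x0: "x 0 = 0" and xS: "\<And>m. cmod (x (Suc m)) \<le> \<rho> m * cmod (x m) + cmod (u m)"
    and uy: "\<And>m. cmod (u m) \<le> D * y m" and y0: "\<And>m. 0 \<le> y m"
    and r0: "\<And>k. 0 \<le> \<rho> k" and rq: "\<And>k. k \<ge> N \<Longrightarrow> \<rho> k \<le> q" and rM: "\<And>k. \<rho> k \<le> M"
    and q: "0 < q" "q \<le> M" and D: "0 \<le> D"
    and T0: "T 0 = 0" and TS: "\<And>m. T (Suc m) = q * T m + y m"
  shows "cmod (x m) \<le> (M/q)^N * D * T m"
proof -
  define G where "G = M/q"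
  have G1: "1 \<le> G" using q unfolding G_def by simp
  have Tn: "\<And>m. 0 \<le> T m" using T_nonneg[of q y T] q y0 T0 TS by auto
  have "cmod (x m) \<le> G^(min m N) * D * T m"
  proof (induction m)
    case 0 then show ?case using x0 T0 by simp
  next
    case (Suc m)
    have GD: "0 \<le> G^(min m N) * D" using G1 D by simp
    have "cmod (x (Suc m)) \<le> \<rho> m * (G^(min m N) * D * T m) + D * y m"
      using xS[of m] uy[of m] Suc r0[of m] mult_left_mono[OF Suc r0[of m]] by linarith
    also have "\<dots> \<le> G^(min (Suc m) N) * D * T (Suc m)"
    proof (cases "m < N")
      case True
      then have e: "min (Suc m) N = Suc (min m N)" by simp
      have "\<rho> m \<le> G * q" using rM q unfolding G_def by simp
      then have "\<rho> m * (G^(min m N) * D * T m) \<le> (G*q) * (G^(min m N) * D * T m)"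
        using GD Tn[of m] by (intro mult_right_mono) auto
      moreover have "D * y m \<le> G^(min (Suc m) N) * D * y m"
      proof -
        have "D * y m * 1 \<le> D * y m * G^(min (Suc m) N)"
          using one_le_power[OF G1] D y0[of m] by (intro mult_left_mono) auto
        then show ?thesis by (simp add: mult_ac)
      qed
      ultimately show ?thesis unfolding TS e by (simp add: algebra_simps)
    next
      case False
      then have e: "min (Suc m) N = N" "min m N = N" by auto
      have "\<rho> m \<le> q" using rq False by simp
      then have "\<rho> m * (G^N * D * T m) \<le> q * (G^N * D * T m)"
        using GD Tn[of m] e by (intro mult_right_mono) auto
      moreover have "D * y m \<le> G^N * D * y m"
      proof -
        have "D * y m * 1 \<le> D * y m * G^N"
          using one_le_power[OF G1] D y0[of m] by (intro mult_left_mono) auto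
        then show ?thesis by (simp add: mult_ac)
      qed
      ultimately show ?thesis unfolding TS e by (simp add: algebra_simps)
    qed
    finally show ?case .
  qed
  also have "\<dots> \<le> G^N * D * T m" using G1 D Tn[of m]
    by (intro mult_right_mono power_increasing) auto
  finally show ?thesis unfolding G_def .
qed


definition mu :: "(nat \<Rightarrow> complex) \<Rightarrow> (nat \<Rightarrow> complex) \<Rightarrow> (nat \<Rightarrow> complex) \<Rightarrow> nat \<Rightarrow> complex" where
  "mu a b lam m = lam m * a m + (if m = 0 then 0 else lam (m - 1) * b (m - 1))"

lemma growth_real:
  assumes "growth_ab a b < \<infinity>"
  shows "growth_ab a b = ereal (real_of_ereal (growth_ab a b))" "0 \<le> real_of_ereal (growth_ab a b)"
proof -
  have "0 \<le> growth_ab a b" unfolding growth_ab_def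
    by (intro le_Limsup) (auto simp: real_root_ge_zero)
  then show "growth_ab a b = ereal (real_of_ereal (growth_ab a b))" "0 \<le> real_of_ereal (growth_ab a b)"
    using assms by (cases "growth_ab a b"; auto)+
qed

lemma disc_summable:
  assumes g: "growth_ab a b < \<infinity>" and z: "z \<in> disc_ab a b"
  shows "summable (\<lambda>n. (cmod (a n) + cmod (b n)) * cmod z ^ n)"
proof -
  define L where "L = real_of_ereal (growth_ab a b)"
  define e where "e n = cmod (a n) + cmod (b n)" for n
  have gL: "growth_ab a b = ereal L" "0 \<le> L" using growth_real[OF g] unfolding L_def by auto
  have cr: "conv_radius e = inverse (ereal L)"
    unfolding conv_radius_def gL(1)[symmetric] growth_ab_def e_def by simp
  have zL: "cmod z * L < 1" using z unfolding disc_ab_def L_def by simp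
  have "ereal (cmod z) < conv_radius e"
  proof (cases "L = 0")
    case True then show ?thesis using cr by simp
  next
    case False
    then have "cmod z < inverse L" using zL gL(2) by (simp add: field_simps)
    then show ?thesis using cr False by simp
  qed
  then have "ereal (norm (cmod z)) < conv_radius e" by simp
  from abs_summable_in_conv_radius[OF this]
  show ?thesis unfolding e_def by (simp add: abs_mult)
qed

lemma disc_ball:
  assumes g: "growth_ab a b < \<infinity>"
  obtains d where "0 < d" "ball 0 d \<subseteq> disc_ab a b"
proof -
  define L where "L = real_of_ereal (growth_ab a b)"
  have L0: "0 \<le> L" using growth_real[OF g] unfolding L_def by auto
  have "ball 0 (1/(L+1)) \<subseteq> disc_ab a b"
  proof
    fix z assume "z \<in> ball (0::complex) (1/(L+1))"
    then have "cmod z < 1/(L+1)" by simp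
    then have "cmod z * (L+1) < 1" using L0 by (simp add: field_simps)
    moreover have "cmod z * L \<le> cmod z * (L+1)" by (intro mult_left_mono) auto
    ultimately have "cmod z * L < 1" by linarith
    then show "z \<in> disc_ab a b" unfolding disc_ab_def L_def by simp
  qed
  moreover have "0 < 1/(L+1)" using L0 by simp
  ultimately show ?thesis using that by blast
qed

lemma term_summable:
  assumes g: "growth_ab a b < \<infinity>" and z: "z \<in> disc_ab a b" and B: "\<And>n. cmod (lam n) \<le> B"
  shows "summable (\<lambda>n. norm (lam n * a n * z ^ n))" "summable (\<lambda>n. norm (lam n * b n * z ^ Suc n))"
    "summable (\<lambda>n. norm (lam n * fab a b n z))"
proof -
  have s: "summable (\<lambda>n. (cmod (a n) + cmod (b n)) * cmod z ^ n)" by (rule disc_summable[OF g z])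
  have B0: "0 \<le> B" using B[of 0] norm_ge_zero order_trans by blast
  have s1: "summable (\<lambda>n. (B * (1 + cmod z)) * ((cmod (a n) + cmod (b n)) * cmod z ^ n))"
    by (rule summable_mult[OF s])
  have b1: "norm (lam n * a n * z ^ n) \<le> (B * (1 + cmod z)) * ((cmod (a n) + cmod (b n)) * cmod z ^ n)" for n
  proof -
    have "norm (lam n * a n * z ^ n) = cmod (lam n) * cmod (a n) * cmod z ^ n" by (simp add: norm_mult norm_power)
    also have "\<dots> \<le> B * ((cmod (a n) + cmod (b n)) * cmod z ^ n)"
      using B[of n] B0 by (simp only: mult.assoc, intro mult_mono) (auto intro: mult_right_mono)
    also have "\<dots> \<le> (B * (1 + cmod z)) * ((cmod (a n) + cmod (b n)) * cmod z ^ n)"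
      using B0 by (intro mult_right_mono) (auto simp: distrib_left)
    finally show ?thesis .
  qed
  have b2: "norm (lam n * b n * z ^ Suc n) \<le> (B * (1 + cmod z)) * ((cmod (a n) + cmod (b n)) * cmod z ^ n)" for n
  proof -
    have "norm (lam n * b n * z ^ Suc n) = cmod (lam n) * (cmod (b n) * cmod z ^ n) * cmod z" by (simp add: norm_mult norm_power mult_ac)
    also have "\<dots> \<le> B * ((cmod (a n) + cmod (b n)) * cmod z ^ n) * cmod z"
      using B[of n] B0 by (intro mult_right_mono mult_mono) auto
    also have "\<dots> \<le> (B * (1 + cmod z)) * ((cmod (a n) + cmod (b n)) * cmod z ^ n)"
      using B0 by (simp add: algebra_simps)
    finally show ?thesis .
  qed
  show s1': "summable (\<lambda>n. norm (lam n * a n * z ^ n))"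
    by (rule summable_comparison_test'[OF s1]) (use b1 in simp)
  show s2': "summable (\<lambda>n. norm (lam n * b n * z ^ Suc n))"
    by (rule summable_comparison_test'[OF s1]) (use b2 in simp)
  have "norm (lam n * fab a b n z) \<le> norm (lam n * a n * z ^ n) + norm (lam n * b n * z ^ Suc n)" for n
  proof -
    have "lam n * fab a b n z = lam n * a n * z ^ n + lam n * b n * z ^ Suc n"
      by (simp add: fab_def algebra_simps)
    then show ?thesis by (simp only: norm_triangle_ineq)
  qed
  then show "summable (\<lambda>n. norm (lam n * fab a b n z))"
    by (intro summable_comparison_test'[OF summable_add[OF s1' s2']]) auto
qed

lemma represents_suminf:
  assumes g: "growth_ab a b < \<infinity>" and B: "\<And>n. cmod (lam n) \<le> B"
  shows "represents_ab a b lam (\<lambda>z. \<Sum>n. lam n * fab a b n z)"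
  unfolding represents_ab_def
proof
  fix z assume z: "z \<in> disc_ab a b"
  show "(\<lambda>n. lam n * fab a b n z) sums (\<Sum>n. lam n * fab a b n z)"
    by (rule summable_sums, rule summable_norm_cancel, rule term_summable(3)[OF g z B])
qed

lemma mu_sums:
  assumes g: "growth_ab a b < \<infinity>" and B: "\<And>n. cmod (lam n) \<le> B"
    and r: "represents_ab a b lam f" and z: "z \<in> disc_ab a b"
  shows "(\<lambda>m. mu a b lam m * z ^ m) sums f z"
proof -
  note ts = term_summable[OF g z B]
  define s1 where "s1 = (\<Sum>n. lam n * a n * z ^ n)"
  define s2 where "s2 = (\<Sum>n. lam n * b n * z ^ Suc n)"
  have h1: "(\<lambda>n. lam n * a n * z ^ n) sums s1" unfolding s1_def
    by (rule summable_sums, rule summable_norm_cancel, rule ts(1))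
  have h2: "(\<lambda>n. lam n * b n * z ^ Suc n) sums s2" unfolding s2_def
    by (rule summable_sums, rule summable_norm_cancel, rule ts(2))
  have "(\<lambda>n. lam n * fab a b n z) sums (s1 + s2)"
  proof -
    have "(\<lambda>n. lam n * a n * z ^ n + lam n * b n * z ^ Suc n) sums (s1 + s2)" by (rule sums_add[OF h1 h2])
    moreover have "(\<lambda>n. lam n * a n * z ^ n + lam n * b n * z ^ Suc n) = (\<lambda>n. lam n * fab a b n z)"
      by (rule ext) (simp add: fab_def distrib_left distrib_right mult.assoc)
    ultimately show ?thesis by simp
  qed
  moreover have "(\<lambda>n. lam n * fab a b n z) sums f z" using r z unfolding represents_ab_def by auto
  ultimately have fz: "f z = s1 + s2" by (rule sums_unique2[symmetric])
  define h where "h m = (if m = 0 then 0 else lam (m - 1) * b (m - 1) * z ^ m)" for m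
  have "(\<lambda>m. h (Suc m)) = (\<lambda>n. lam n * b n * z ^ Suc n)" by (rule ext) (simp add: h_def)
  then have "(\<lambda>m. h (Suc m)) sums s2" using h2 by simp
  then have "h sums (s2 + h 0)" by (simp only: sums_Suc_iff)
  then have h3: "h sums s2" by (simp add: h_def)
  have "(\<lambda>m. lam m * a m * z ^ m + h m) sums (s1 + s2)" by (rule sums_add[OF h1 h3])
  moreover have "(\<lambda>m. lam m * a m * z ^ m + h m) = (\<lambda>m. mu a b lam m * z ^ m)"
    by (rule ext) (simp add: h_def mu_def distrib_right)
  ultimately show ?thesis using fz by simp
qed

lemma taylor_mu:
  assumes g: "growth_ab a b < \<infinity>" and B: "\<And>n. cmod (lam n) \<le> B"
    and r: "represents_ab a b lam f"
  shows "taylor_coeff f m = mu a b lam m"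
proof -
  obtain d where d: "0 < d" "ball 0 d \<subseteq> disc_ab a b" using disc_ball[OF g] by blast
  define F where "F = Abs_fps (mu a b lam)"
  have "complex_of_real (d/2) \<in> disc_ab a b" using d by auto
  from mu_sums[OF g B r this] have "summable (\<lambda>m. mu a b lam m * complex_of_real (d/2) ^ m)"
    by (rule sums_summable)
  from conv_radius_geI[OF this] have "fps_conv_radius F \<ge> d/2"
    unfolding F_def fps_conv_radius_def using d by simp
  then have cr: "fps_conv_radius F > 0" using d
    by (metis ereal_less(2) half_gt_zero order_less_le_trans)
  have "eventually (\<lambda>z. z \<in> ball 0 d) (nhds (0::complex))"
    using d by (intro eventually_nhds_in_open) auto
  then have "eventually (\<lambda>z. eval_fps F z = f z) (nhds 0)"
  proof (rule eventually_mono)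
    fix z assume "z \<in> ball (0::complex) d"
    then have "z \<in> disc_ab a b" using d by auto
    from mu_sums[OF g B r this] show "eval_fps F z = f z"
      unfolding eval_fps_def F_def by (simp add: sums_iff)
  qed
  with cr have "f has_fps_expansion F" unfolding has_fps_expansion_def by auto
  from fps_nth_fps_expansion[OF this, of m] show ?thesis
    unfolding taylor_coeff_def F_def by simp
qed


primrec shiftx :: "(nat \<Rightarrow> complex) \<Rightarrow> (nat \<Rightarrow> complex) \<Rightarrow> (nat \<Rightarrow> complex) \<Rightarrow> (nat \<Rightarrow> complex) \<Rightarrow> nat \<Rightarrow> complex" where
  "shiftx a b w lam 0 = 0"
| "shiftx a b w lam (Suc m) = (w m * mu a b lam m - shiftx a b w lam m * b m) / a (Suc m)"

primrec Tq :: "real \<Rightarrow> (nat \<Rightarrow> real) \<Rightarrow> nat \<Rightarrow> real" where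
  "Tq q y 0 = 0"
| "Tq q y (Suc m) = q * Tq q y m + y m"

definition yseq :: "(nat \<Rightarrow> complex) \<Rightarrow> nat \<Rightarrow> real" where
  "yseq lam m = max (cmod (lam m)) (if m = 0 then 0 else cmod (lam (m - 1)))"

lemma prod_reindex3: "(\<Prod>k=3..n. f k) = (\<Prod>i<n-2. f (i+3::nat))"
proof (cases "n \<ge> 3")
  case True
  then obtain t where t: "n = t + 3" by (metis add.commute le_add_diff_inverse)
  have "(\<Prod>k=3..n. f k) = (\<Prod>k=0+3..t+3. f k)" using t by simp
  also have "\<dots> = (\<Prod>i=0..t. f (i+3))" by (rule prod.shift_bounds_cl_nat_ivl)
  also have "\<dots> = (\<Prod>i<n-2. f (i+3))" using t by (simp add: atLeast0AtMost lessThan_Suc_atMost)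
  finally show ?thesis .
next
  case False
  then have "n - 2 = 0 \<or> n = 2" by auto
  then show ?thesis using False by auto
qed



theorem mainTheorem3:
  fixes a b w :: "nat \<Rightarrow> complex"
  assumes a_nz: "\<And>n. a n \<noteq> 0"
    and b_nz: "\<And>n. b n \<noteq> 0"
    and growth: "growth_ab a b < \<infinity>"
    and h1: "bdd_above (range (\<lambda>n. cmod (w n * a n / a (n + 1))))"
    and h2: "limsup (\<lambda>n. ereal (cmod (b n / a (n + 1)))) < 1"
  defines "c \<equiv> (\<lambda>n. w (n + 1) * (b n / a (n + 2))
                     - w n * (a n / a (n + 1)) * (b (n + 1) / a (n + 2)))"
  shows "bdd_above (range (\<lambda>n. cmod (c n)))
    \<and> (\<forall>n\<ge>3. bdd_above (range (\<lambda>j. cmod (c j * (\<Prod>k=3..n. b (j + k - 1) / a (j + k))))))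
    \<and> summable (\<lambda>i. SUP j. cmod (c j * (\<Prod>k=3..i+3. b (j + k - 1) / a (j + k))))
    \<and> (\<forall>p::real. 1 \<le> p \<longrightarrow> shift_bounded_lp p a b w)
    \<and> shift_bounded_c0 a b w"
proof -
  define \<rho> where "\<rho> k = cmod (b k / a (Suc k))" for k
  have r0: "\<And>k. 0 \<le> \<rho> k" unfolding \<rho>_def by simp
  have "limsup (\<lambda>n. ereal (\<rho> n)) < 1" using h2 unfolding \<rho>_def by simp
  then obtain q0 :: real where q0: "limsup (\<lambda>n. ereal (\<rho> n)) < ereal q0" "ereal q0 < 1"
    using ereal_dense2 by blast
  define q where "q = max q0 (1/2)"
  have q: "0 < q" "q < 1" using q0(2) unfolding q_def by auto
  have "limsup (\<lambda>n. ereal (\<rho> n)) < ereal q" using q0(1) unfolding q_def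
    by (meson ereal_less_eq(3) max.cobounded1 order_less_le_trans)
  from Limsup_lessD[OF this] obtain N where N: "\<And>k. k \<ge> N \<Longrightarrow> ereal (\<rho> k) < ereal q"
    unfolding eventually_sequentially by blast
  have rq: "\<And>k. k \<ge> N \<Longrightarrow> \<rho> k \<le> q" using N by (simp add: less_imp_le)
  define M where "M = q + (\<Sum>k<N. \<rho> k)"
  have qM: "q \<le> M" unfolding M_def using r0 by (simp add: sum_nonneg)
  have rM: "\<rho> k \<le> M" for k
  proof (cases "k < N")
    case True
    then have "\<rho> k \<le> (\<Sum>k<N. \<rho> k)" using r0 by (intro member_le_sum) auto
    then show ?thesis unfolding M_def using q by simp
  next
    case False then show ?thesis using rq[of k] qM by simp
  qed
  from h1 obtain S where S: "\<And>n. cmod (w n * a n / a (Suc n)) \<le> S"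
    unfolding bdd_above_def by auto
  have S0: "0 \<le> S" using S[of 0] norm_ge_zero order_trans by blast
  have M0: "0 \<le> M" using q qM by simp
  have cb: "cmod (c n) \<le> 2 * S * M" for n
  proof -
    have "c n = (w (Suc n) * a (Suc n) / a (Suc (Suc n))) * (b n / a (Suc n))
               - (w n * a n / a (Suc n)) * (b (Suc n) / a (Suc (Suc n)))"
      unfolding c_def using a_nz[of "Suc n"] by (simp add: field_simps)
    then have "cmod (c n) \<le> cmod (w (Suc n) * a (Suc n) / a (Suc (Suc n))) * \<rho> n
               + cmod (w n * a n / a (Suc n)) * \<rho> (Suc n)"
      unfolding \<rho>_def by (metis norm_mult norm_triangle_ineq4)
    also have "\<dots> \<le> S * M + S * M"
      using S r0 rM S0 by (intro add_mono mult_mono) auto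
    also have "\<dots> = 2 * S * M" by simp
    finally show ?thesis .
  qed
  have C1: "bdd_above (range (\<lambda>n. cmod (c n)))" using cb by (auto simp: bdd_above_def)
  define G where "G = (M/q)^N"
  have G0: "0 \<le> G" unfolding G_def using q M0 by simp
  have pb: "cmod (c j * (\<Prod>k=3..n. b (j + k - 1) / a (j + k))) \<le> 2 * S * M * G * q^(n-2)" for j n
  proof -
    have "cmod (\<Prod>k=3..n. b (j + k - 1) / a (j + k)) = (\<Prod>i<n-2. cmod (b (j + (i+3) - 1) / a (j + (i+3))))"
      by (simp add: prod_reindex3 prod_norm)
    also have "\<dots> = (\<Prod>i<n-2. \<rho> ((j+2) + i))"
      unfolding \<rho>_def by (intro prod.cong) (simp_all add: eval_nat_numeral ac_simps)
    also have "\<dots> \<le> G * q^(n-2)" unfolding G_def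
      by (rule prod_bound[OF r0 rq rM q(1) qM])
    finally have "cmod (\<Prod>k=3..n. b (j + k - 1) / a (j + k)) \<le> G * q^(n-2)" .
    then have "cmod (c j) * cmod (\<Prod>k=3..n. b (j + k - 1) / a (j + k)) \<le> (2 * S * M) * (G * q^(n-2))"
      using cb[of j] S0 M0 G0 q by (intro mult_mono) auto
    then show ?thesis by (simp add: norm_mult mult.assoc)
  qed
  have C2: "\<forall>n\<ge>3. bdd_above (range (\<lambda>j. cmod (c j * (\<Prod>k=3..n. b (j + k - 1) / a (j + k)))))"
    using pb by (auto simp: bdd_above_def)
  have C3: "summable (\<lambda>i. SUP j. cmod (c j * (\<Prod>k=3..i+3. b (j + k - 1) / a (j + k))))"
  proof (rule summable_comparison_test')
    show "summable (\<lambda>i. (2 * S * M * G * q) * q ^ i)"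
      using q by (intro summable_mult summable_geometric) auto
    fix i :: nat
    let ?f = "\<lambda>j. cmod (c j * (\<Prod>k=3..i+3. b (j + k - 1) / a (j + k)))"
    have ub: "?f j \<le> (2 * S * M * G * q) * q ^ i" for j
      using pb[of j "i+3"] by (simp add: mult_ac)
    have "(SUP j. ?f j) \<le> (2 * S * M * G * q) * q ^ i" by (rule cSUP_least) (use ub in auto)
    moreover have "0 \<le> (SUP j. ?f j)"
      by (rule cSUP_upper2[of _ _ 0]) (use ub in \<open>auto simp: bdd_above_def\<close>)
    ultimately show "norm (SUP j. ?f j) \<le> (2 * S * M * G * q) * q ^ i" by simp
  qed
  define D where "D = S * (1 + M)"
  have D0: "0 \<le> D" unfolding D_def using S0 M0 by simp
  define K where "K = G * D"
  have K0: "0 \<le> K" unfolding K_def using G0 D0 by simp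
  have yn: "\<And>lam m. 0 \<le> yseq lam m" unfolding yseq_def by (auto simp: le_max_iff_disj)
  have xb: "cmod (shiftx a b w lam m) \<le> K * Tq q (yseq lam) m" for lam m
  proof -
    define u where "u m = w m * mu a b lam m / a (Suc m)" for m
    have xS: "cmod (shiftx a b w lam (Suc m)) \<le> \<rho> m * cmod (shiftx a b w lam m) + cmod (u m)" for m
    proof -
      have "shiftx a b w lam (Suc m) = u m - shiftx a b w lam m * (b m / a (Suc m))"
        unfolding u_def by (simp add: diff_divide_distrib)
      then show ?thesis unfolding \<rho>_def
        by (metis add.commute mult.commute norm_mult norm_triangle_ineq4)
    qed
    have uy: "cmod (u m) \<le> D * yseq lam m" for m
    proof (cases m)
      case 0
      have "u m = (w 0 * a 0 / a (Suc 0)) * lam 0" unfolding u_def mu_def 0 by simp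
      then have "cmod (u m) = cmod (w 0 * a 0 / a (Suc 0)) * cmod (lam 0)" by (simp only: norm_mult)
      also have "\<dots> \<le> S * yseq lam m" using S[of 0] S0 unfolding yseq_def 0
        by (intro mult_mono) auto
      also have "\<dots> \<le> D * yseq lam m" unfolding D_def using S0 M0 yn[of lam m]
        by (intro mult_right_mono) (auto simp: distrib_left)
      finally show ?thesis .
    next
      case (Suc k)
      have "u m = (w m * a m / a (Suc m)) * lam m + (w m * a m / a (Suc m)) * (b k / a (Suc k)) * lam k"
        unfolding u_def mu_def Suc using a_nz[of "Suc k"] a_nz[of "Suc (Suc k)"] by (simp add: field_simps)
      then have "cmod (u m) \<le> cmod (w m * a m / a (Suc m)) * cmod (lam m) + cmod (w m * a m / a (Suc m)) * \<rho> k * cmod (lam k)"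
        unfolding \<rho>_def by (metis norm_mult norm_triangle_ineq)
      also have "\<dots> \<le> S * yseq lam m + S * M * yseq lam m"
        unfolding yseq_def Suc using S r0 rM S0 M0
        by (intro add_mono mult_mono) (auto simp: mult_nonneg_nonneg)
      also have "\<dots> = D * yseq lam m" unfolding D_def by (simp add: algebra_simps)
      finally show ?thesis .
    qed
    show ?thesis unfolding K_def G_def
      by (rule rec_bound[where u=u and \<rho>=\<rho> and N=N and M=M, OF _ xS uy yn r0 rq rM q(1) qM D0]) auto
  qed
  have Tn: "0 \<le> Tq q (yseq lam) m" for lam m
    by (rule T_nonneg[of q "yseq lam"]) (use q yn in auto)
  have constr: "represents_ab a b (shiftx a b w lam) (\<lambda>z. \<Sum>n. shiftx a b w lam n * fab a b n z)
       \<and> is_shift_image w f (\<lambda>z. \<Sum>n. shiftx a b w lam n * fab a b n z)"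
    if B: "\<And>n. cmod (lam n) \<le> B" and r: "represents_ab a b lam f" for lam f B
  proof -
    have B0: "0 \<le> B" using B[of 0] norm_ge_zero order_trans by blast
    have yB: "yseq lam m \<le> B" for m unfolding yseq_def using B B0 by auto
    have xB: "cmod (shiftx a b w lam n) \<le> K * (B / (1 - q))" for n
      using xb[of lam n] T_sup[of q "yseq lam" B "Tq q (yseq lam)" n] q yn yB K0
      by (smt (verit, best) Tq.simps mult_left_mono)
    note rg = represents_suminf[OF growth xB]
    have "is_shift_image w f (\<lambda>z. \<Sum>n. shiftx a b w lam n * fab a b n z)"
      unfolding is_shift_image_def
    proof
      fix m
      show "taylor_coeff (\<lambda>z. \<Sum>n. shiftx a b w lam n * fab a b n z) m =
        (if m = 0 then 0 else w (m - 1) * taylor_coeff f (m - 1))"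
      proof (cases m)
        case 0 then show ?thesis using taylor_mu[OF growth xB rg, where m=0] by (simp add: mu_def)
      next
        case (Suc k)
        have "mu a b (shiftx a b w lam) m = shiftx a b w lam (Suc k) * a (Suc k) + shiftx a b w lam k * b k"
          unfolding Suc by (simp add: mu_def)
        also have "\<dots> = w k * mu a b lam k"
          using a_nz[of "Suc k"] by simp
        finally have "mu a b (shiftx a b w lam) m = w k * mu a b lam k" .
        then show ?thesis using taylor_mu[OF growth B r, where m=k] taylor_mu[OF growth xB rg, where m=m] Suc by simp
      qed
    qed
    with rg show ?thesis by simp
  qed
  have C5: "shift_bounded_c0 a b w"
    unfolding shift_bounded_c0_def
  proof (rule exI[of _ "K / (1 - q)"], intro allI impI)
    fix lam f assume A: "in_c0 lam \<and> represents_ab a b lam f"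
    then have lim: "lam \<longlonglongrightarrow> 0" unfolding in_c0_def by simp
    then obtain B where B: "\<And>n. cmod (lam n) \<le> B"
      using convergent_imp_Bseq[of lam] lim unfolding Bseq_def convergent_def by blast
    have bdd: "bdd_above (range (\<lambda>n. cmod (lam n)))" using B by (auto simp: bdd_above_def)
    have ysup: "yseq lam m \<le> sup_norm lam" for m
      unfolding yseq_def sup_norm_def using bdd
      by (auto intro!: cSUP_upper2[OF bdd] cSUP_upper simp: cSUP_upper)
    have ylim: "yseq lam \<longlonglongrightarrow> 0"
    proof -
      have l1: "(\<lambda>m. cmod (lam m)) \<longlonglongrightarrow> 0" using tendsto_norm_zero[OF lim] .
      have "(\<lambda>m. (\<lambda>m. if m = 0 then 0 else cmod (lam (m - 1))) (Suc m)) \<longlonglongrightarrow> 0" using l1 by simp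
      then have l2: "(\<lambda>m. if m = 0 then 0 else cmod (lam (m - 1))) \<longlonglongrightarrow> 0"
        by (rule LIMSEQ_imp_Suc)
      have "(\<lambda>m. max (cmod (lam m)) (if m = 0 then 0 else cmod (lam (m - 1)))) \<longlonglongrightarrow> max 0 0"
        by (intro tendsto_max l1 l2)
      then show ?thesis unfolding yseq_def by simp
    qed
    have Tlim: "Tq q (yseq lam) \<longlonglongrightarrow> 0" by (rule T_lim[OF q yn ylim]) auto
    have xlim: "shiftx a b w lam \<longlonglongrightarrow> 0"
    proof (rule Lim_null_comparison[where g = "\<lambda>m. K * Tq q (yseq lam) m"])
      show "\<forall>\<^sub>F m in sequentially. norm (shiftx a b w lam m) \<le> K * Tq q (yseq lam) m"
        using xb by simp
      show "(\<lambda>m. K * Tq q (yseq lam) m) \<longlonglongrightarrow> 0"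
        using tendsto_mult_right_zero[OF Tlim, of K] by simp
    qed
    have xsup: "cmod (shiftx a b w lam m) \<le> K / (1 - q) * sup_norm lam" for m
    proof -
      have "Tq q (yseq lam) m \<le> sup_norm lam / (1 - q)"
        by (rule T_sup[OF q yn ysup]) auto
      then have "K * Tq q (yseq lam) m \<le> K * (sup_norm lam / (1 - q))" using K0 by (rule mult_left_mono)
      then show ?thesis using xb[of lam m] by simp
    qed
    have "sup_norm (shiftx a b w lam) \<le> K / (1 - q) * sup_norm lam"
      unfolding sup_norm_def[of "shiftx a b w lam"] by (rule cSUP_least) (use xsup in auto)
    moreover have "represents_ab a b lam f" using A by simp
    note cs = constr[of lam B f, OF B this]
    ultimately show "\<exists>lam' g. in_c0 lam' \<and> represents_ab a b lam' g \<and> is_shift_image w f g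
                 \<and> sup_norm lam' \<le> K / (1 - q) * sup_norm lam"
      unfolding in_c0_def using xlim by blast
  qed
  have C4: "\<forall>p::real. 1 \<le> p \<longrightarrow> shift_bounded_lp p a b w"
  proof (intro allI impI)
    fix p :: real assume p: "1 \<le> p"
    define Cp where "Cp = (K powr p * 2 / (1-q) powr p) powr (1/p)"
    show "shift_bounded_lp p a b w" unfolding shift_bounded_lp_def
    proof (rule exI[of _ Cp], intro allI impI)
      fix lam f assume A: "in_lp p lam \<and> represents_ab a b lam f"
      have sl: "summable (\<lambda>n. cmod (lam n) powr p)" using A unfolding in_lp_def by simp
      define Sg where "Sg = (\<Sum>n. cmod (lam n) powr p)"
      have Sg0: "0 \<le> Sg" unfolding Sg_def by (intro suminf_nonneg sl) auto
      have termle: "cmod (lam n) powr p \<le> Sg" for n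
        unfolding Sg_def using sum_le_suminf[OF sl, of "{n}"] by simp
      have B: "cmod (lam n) \<le> max 1 Sg" for n
      proof (cases "cmod (lam n) \<le> 1")
        case True then show ?thesis by simp
      next
        case False
        then have "cmod (lam n) = cmod (lam n) powr 1" by simp
        also have "\<dots> \<le> cmod (lam n) powr p" using False p by (intro powr_mono) auto
        also have "\<dots> \<le> Sg" by (rule termle)
        finally show ?thesis by simp
      qed
      have ypow: "yseq lam m powr p \<le> cmod (lam m) powr p + (if m = 0 then 0 else cmod (lam (m-1)) powr p)" for m
      proof -
        have a1: "0 \<le> cmod (lam m) powr p" by simp
        have a2: "0 \<le> (if m = 0 then 0 else cmod (lam (m-1)) powr p)" by simp
        show ?thesis
        proof (cases "cmod (lam m) \<ge> (if m = 0 then 0 else cmod (lam (m - 1)))")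
          case True then have "yseq lam m = cmod (lam m)" unfolding yseq_def by simp
          then show ?thesis using a2 by simp
        next
          case False then have "yseq lam m = (if m = 0 then 0 else cmod (lam (m - 1)))" unfolding yseq_def by simp
          then show ?thesis using a1 by (cases "m = 0") simp_all
        qed
      qed
      have Y: "(\<Sum>m<n. yseq lam m powr p) \<le> 2 * Sg" for n
      proof -
        have s1: "(\<Sum>m<n. yseq lam m powr p) \<le> (\<Sum>m<n. cmod (lam m) powr p) + (\<Sum>m<n. (if m = 0 then 0 else cmod (lam (m-1)) powr p))"
          unfolding sum.distrib[symmetric] by (intro sum_mono ypow)
        have s2: "(\<Sum>m<n. cmod (lam m) powr p) \<le> Sg" unfolding Sg_def by (rule sum_le_suminf[OF sl]) auto
        have s3: "(\<Sum>m<n. (if m = 0 then 0 else cmod (lam (m-1)) powr p)) \<le> Sg"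
        proof (cases n)
          case 0 then show ?thesis using Sg0 by simp
        next
          case (Suc k)
          have "(\<Sum>m<n. (if m = 0 then 0 else cmod (lam (m-1)) powr p)) = (\<Sum>m<k. cmod (lam m) powr p)"
            unfolding Suc sum.lessThan_Suc_shift by simp
          also have "\<dots> \<le> Sg" unfolding Sg_def by (rule sum_le_suminf[OF sl]) auto
          finally show ?thesis .
        qed
        from s1 s2 s3 show ?thesis by linarith
      qed
      have Tp: "(\<Sum>m<n. Tq q (yseq lam) m powr p) \<le> 2 * Sg / (1-q) powr p" for n
        by (rule T_lp[OF q p yn]) (auto intro: Y)
      define Z where "Z = K powr p * (2 * Sg / (1-q) powr p)"
      have xp: "cmod (shiftx a b w lam m) powr p \<le> K powr p * Tq q (yseq lam) m powr p" for m
      proof -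
        have "cmod (shiftx a b w lam m) powr p \<le> (K * Tq q (yseq lam) m) powr p"
          using xb[of lam m] p by (intro powr_mono2) auto
        also have "\<dots> = K powr p * Tq q (yseq lam) m powr p" using K0 Tn[of lam m] by (simp add: powr_mult)
        finally show ?thesis .
      qed
      have xpart: "(\<Sum>m<n. cmod (shiftx a b w lam m) powr p) \<le> Z" for n
      proof -
        have "(\<Sum>m<n. cmod (shiftx a b w lam m) powr p) \<le> (\<Sum>m<n. K powr p * Tq q (yseq lam) m powr p)"
          by (intro sum_mono xp)
        also have "\<dots> = K powr p * (\<Sum>m<n. Tq q (yseq lam) m powr p)" by (simp add: sum_distrib_left)
        also have "\<dots> \<le> Z" unfolding Z_def by (intro mult_left_mono Tp) auto
        finally show ?thesis .
      qed
      have xs: "summable (\<lambda>m. cmod (shiftx a b w lam m) powr p)"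
        by (rule summableI_nonneg_bounded[where x=Z]) (auto intro: xpart)
      have xsum: "(\<Sum>m. cmod (shiftx a b w lam m) powr p) \<le> Z" by (rule suminf_le_const[OF xs xpart])
      have "lp_norm p (shiftx a b w lam) \<le> Z powr (1/p)"
        unfolding lp_norm_def using p by (intro powr_mono2 xsum suminf_nonneg xs) auto
      also have "Z = (K powr p * 2 / (1-q) powr p) * Sg" unfolding Z_def by simp
      also have "((K powr p * 2 / (1-q) powr p) * Sg) powr (1/p) = Cp * lp_norm p lam"
        unfolding Cp_def lp_norm_def Sg_def[symmetric] using Sg0 by (intro powr_mult)
      finally have nb: "lp_norm p (shiftx a b w lam) \<le> Cp * lp_norm p lam" .
      have "represents_ab a b lam f" using A by simp
      note cs = constr[of lam "max 1 Sg" f, OF B this]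
      show "\<exists>lam' g. in_lp p lam' \<and> represents_ab a b lam' g \<and> is_shift_image w f g
                 \<and> lp_norm p lam' \<le> Cp * lp_norm p lam"
        unfolding in_lp_def using cs xs nb by blast
    qed
  qed
  show ?thesis using C1 C2 C3 C4 C5 by blast
qed
end
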